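(* Let $A=A_n\ge2$ be an integer, $\Delta>0$, $a,b\in\mathbb R$, $\sigma>0$, and for $1\le i\le n$ let $X_i=i\Delta$, $Y_i=aX_i+b+e_i$ with $e_1,\dots,e_n$ i.i.d. $\mathcal N(0,\sigma^2)$. Let $\hat a(k,A)$ be the least-squares slope $$\hat a(k,A)=\frac{A\sum_{j=k+1}^{k+A}X_jY_j-\sum_{j=k+1}^{k+A}X_j\sum_{j=k+1}^{k+A}Y_j}{A\sum_{j=k+1}^{k+A}X_j^2-\big(\sum_{j=k+1}^{k+A}X_j\big)^2},$$ $D_3(k,A)=\hat a(k,A)-\hat a(k-A,A)$ for $A\le k\le n-A$, and $D_3^{\mathrm{Std}}(k,A)=D_3(k,A)/\sqrt{\mathrm{Var}[D_3(k,A)]}$. Then for $A\le k_1,k_2\le n-A$, with $p=|k_2-k_1|$, $$\mathrm{Cov}\big(D_3^{\mathrm{Std}}(k_1,A),D_3^{\mathrm{Std}}(k_2,A)\big)=\frac{6}{A(A^2-1)}\times\begin{cases}f_1(p,A)&\text{if }0\le p<A,\\ f_2(p,A)&\text{if }A\le p\le 2A-1,\\ 0&\text{if }p>2A-1,\end{cases}$$ where $$f_1(p,A)=\tfrac16(A-p)(A^2-2Ap-2p^2-1)+\tfrac1{12}p(3A^2+2p^2-6Ap+1),$$ $$f_2(p,A)=-\tfrac1{12}(2A-p)(A^2+2Ap-2p^2-1).$$ *)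

theory Defs
  imports "HOL-Probability.Probability"
begin

definition cov :: "'a measure \<Rightarrow> ('a \<Rightarrow> real) \<Rightarrow> ('a \<Rightarrow> real) \<Rightarrow> real" where
  "cov M U V = (LINT w|M. (U w - (LINT x|M. U x)) * (V w - (LINT x|M. V x)))"

definition var :: "'a measure \<Rightarrow> ('a \<Rightarrow> real) \<Rightarrow> real" where
  "var M U = (LINT w|M. (U w - (LINT x|M. U x))\<^sup>2)"

definition ls_slope :: "(nat \<Rightarrow> real) \<Rightarrow> (nat \<Rightarrow> real) \<Rightarrow> nat \<Rightarrow> nat \<Rightarrow> real" where
  "ls_slope X Y k A =
     (real A * (\<Sum>j=k+1..k+A. X j * Y j) - (\<Sum>j=k+1..k+A. X j) * (\<Sum>j=k+1..k+A. Y j)) /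
     (real A * (\<Sum>j=k+1..k+A. (X j)\<^sup>2) - (\<Sum>j=k+1..k+A. X j)\<^sup>2)"

definition D3 :: "(nat \<Rightarrow> real) \<Rightarrow> (nat \<Rightarrow> real) \<Rightarrow> nat \<Rightarrow> nat \<Rightarrow> real" where
  "D3 X Y k A = ls_slope X Y k A - ls_slope X Y (k - A) A"

definition D3_std :: "'a measure \<Rightarrow> (nat \<Rightarrow> real) \<Rightarrow> ('a \<Rightarrow> nat \<Rightarrow> real) \<Rightarrow> nat \<Rightarrow> nat \<Rightarrow> 'a \<Rightarrow> real" where
  "D3_std M X Y k A w = D3 X (Y w) k A / sqrt (var M (\<lambda>v. D3 X (Y v) k A))"

definition f1 :: "real \<Rightarrow> real \<Rightarrow> real" where
  "f1 p A = (1/6) * (A - p) * (A\<^sup>2 - 2*A*p - 2*p\<^sup>2 - 1) + (1/12) * p * (3*A\<^sup>2 + 2*p\<^sup>2 - 6*A*p + 1)"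

definition f2 :: "real \<Rightarrow> real \<Rightarrow> real" where
  "f2 p A = - (1/12) * (2*A - p) * (A\<^sup>2 + 2*A*p - 2*p\<^sup>2 - 1)"

end

theory Submission
  imports Defs
begin


definition hh :: "nat \<Rightarrow> nat \<Rightarrow> real" where
  "hh A t = (if 1 \<le> t \<and> t \<le> A then (real A + 1)/2 - real t
             else if A < t \<and> t \<le> 2*A then real t - real A - (real A + 1)/2 else 0)"

lemma PP: "(\<Sum>i<L. (x + real i)*(y + real i)) =
   real L*x*y + (x+y)*real L*(real L - 1)/2 + (real L - 1)*real L*(2*real L - 1)/6"
  by (induct L) (simp_all add: field_simps power2_eq_square)

lemma shift_sum: "sum f {a..<a+L} = (\<Sum>i<L. f (a+i))" for a L :: nat
  by (induct L) auto

lemma comb0: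
  assumes "A \<ge> 2"
  shows "(\<Sum>u\<in>{1..<q+2*A+1}. hh A u * hh A (u - q)) =
     (if real q < real A then f1 (real q) (real A)
      else if real q \<le> 2*real A - 1 then f2 (real q) (real A) else 0)"
proof (cases "q < A")
  case True
  then obtain r where r: "A = q + r" "r \<ge> 1" by (metis le_add_diff_inverse less_imp_le_nat nat_le_iff_add less_diff_conv zero_less_diff Suc_leI add.commute One_nat_def)
  define m where "m = (real A + 1)/2"
  define F where "F u = hh A u * hh A (u - q)" for u
  have cc: "\<And>a b c. a \<le> b \<Longrightarrow> b \<le> c \<Longrightarrow> sum F {a..<c} = sum F {a..<b} + sum F {b..<c}"
    by (simp add: sum.atLeastLessThan_concat)
  have split: "sum F {1..<q+2*A+1} = sum F {1..<q+1} + sum F {q+1..<A+1}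
    + sum F {A+1..<A+q+1} + sum F {A+q+1..<2*A+1} + sum F {2*A+1..<q+2*A+1}"
    using r cc[of 1 "2*A+1" "q+2*A+1"] cc[of 1 "A+q+1" "2*A+1"] cc[of 1 "A+1" "A+q+1"] cc[of 1 "q+1" "A+1"]
    by simp
  have p1: "(\<Sum>u\<in>{1..<q+1}. hh A u * hh A (u - q)) = 0"
    by (rule sum.neutral) (auto simp: hh_def)
  have p5: "(\<Sum>u\<in>{2*A+1..<q+2*A+1}. hh A u * hh A (u - q)) = 0"
    by (rule sum.neutral) (auto simp: hh_def)
  have h1: "hh A t = m - real t" if "1 \<le> t" "t \<le> A" for t
    using that by (simp add: hh_def m_def)
  have h2: "hh A t = real t - real A - m" if "A < t" "t \<le> 2*A" for t
    using that by (simp add: hh_def m_def)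
  have p2: "(\<Sum>u\<in>{q+1..<A+1}. hh A u * hh A (u - q)) = (\<Sum>i<r. ((real q + 1 - m) + real i) * ((1 - m) + real i))"
  proof -
    have "(\<Sum>u\<in>{q+1..<A+1}. hh A u * hh A (u - q)) = (\<Sum>i<r. hh A (q+1+i) * hh A (q+1+i - q))"
      using r shift_sum[of "\<lambda>u. hh A u * hh A (u - q)" "q+1" r] by simp
    also have "\<dots> = (\<Sum>i<r. ((real q + 1 - m) + real i) * ((1 - m) + real i))"
    proof (rule sum.cong)
      fix i assume "i \<in> {..<r}"
      then have i: "i < r" by simp
      have e1: "hh A (q+1+i) = m - real (q+1+i)" by (rule h1) (use r i in auto)
      moreover have e2: "q+1+i-q = 1+i" by simp
      moreover have e3: "hh A (1+i) = m - real (1+i)" by (rule h1) (use r i in auto)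
      ultimately show "hh A (q+1+i) * hh A (q+1+i - q) = ((real q + 1 - m) + real i) * ((1 - m) + real i)"
        by (simp only: e1 e2 e3 of_nat_add of_nat_1) (simp add: algebra_simps)
    qed simp
    finally show ?thesis .
  qed
  have p3: "(\<Sum>u\<in>{A+1..<A+q+1}. hh A u * hh A (u - q)) = - (\<Sum>i<q. ((1 - m) + real i) * ((real r + 1 - m) + real i))"
  proof -
    have "(\<Sum>u\<in>{A+1..<A+q+1}. hh A u * hh A (u - q)) = (\<Sum>i<q. hh A (A+1+i) * hh A (A+1+i - q))"
      using r shift_sum[of "\<lambda>u. hh A u * hh A (u - q)" "A+1" q] by (simp add: add.assoc)
    also have "\<dots> = (\<Sum>i<q. - (((1 - m) + real i) * ((real r + 1 - m) + real i)))"
    proof (rule sum.cong)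
      fix i assume "i \<in> {..<q}"
      then have i: "i < q" by simp
      have e1: "hh A (A+1+i) = real (A+1+i) - real A - m" by (rule h2) (use r i in auto)
      moreover have e2: "A+1+i-q = r+1+i" using r by simp
      moreover have e3: "hh A (r+1+i) = m - real (r+1+i)" by (rule h1) (use r i in auto)
      ultimately show "hh A (A+1+i) * hh A (A+1+i - q) = - (((1 - m) + real i) * ((real r + 1 - m) + real i))"
        by (simp only: e1 e2 e3 of_nat_add of_nat_1) (simp add: algebra_simps)
    qed simp
    finally show ?thesis by (simp add: sum_negf)
  qed
  have p4: "(\<Sum>u\<in>{A+q+1..<2*A+1}. hh A u * hh A (u - q)) = (\<Sum>i<r. ((real q + 1 - m) + real i) * ((1 - m) + real i))"
  proof -
    have "(\<Sum>u\<in>{A+q+1..<2*A+1}. hh A u * hh A (u - q)) = (\<Sum>i<r. hh A (A+q+1+i) * hh A (A+q+1+i - q))"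
    proof -
      have "2*A+1 = (A+q+1)+r" using r by simp
      then show ?thesis by (simp only: shift_sum)
    qed
    also have "\<dots> = (\<Sum>i<r. ((real q + 1 - m) + real i) * ((1 - m) + real i))"
    proof (rule sum.cong)
      fix i assume "i \<in> {..<r}"
      then have i: "i < r" by simp
      have e1: "hh A (A+q+1+i) = real (A+q+1+i) - real A - m" by (rule h2) (use r i in auto)
      moreover have e2: "A+q+1+i-q = A+1+i" by simp
      moreover have e3: "hh A (A+1+i) = real (A+1+i) - real A - m" by (rule h2) (use r i in auto)
      ultimately show "hh A (A+q+1+i) * hh A (A+q+1+i - q) = ((real q + 1 - m) + real i) * ((1 - m) + real i)"
        by (simp only: e1 e2 e3 of_nat_add of_nat_1) (simp add: algebra_simps)
    qed simp
    finally show ?thesis .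
  qed
  show ?thesis
    using True r unfolding split[unfolded F_def] p1 p2 p3 p4 p5 PP
    by (simp add: f1_def m_def field_simps power2_eq_square power3_eq_cube)
next
  case False
  define m where "m = (real A + 1)/2"
  have h1: "hh A t = m - real t" if "1 \<le> t" "t \<le> A" for t
    using that by (simp add: hh_def m_def)
  have h2: "hh A t = real t - real A - m" if "A < t" "t \<le> 2*A" for t
    using that by (simp add: hh_def m_def)
  define F where "F u = hh A u * hh A (u - q)" for u
  have cc: "\<And>a b c. a \<le> b \<Longrightarrow> b \<le> c \<Longrightarrow> sum F {a..<c} = sum F {a..<b} + sum F {b..<c}"
    by (simp add: sum.atLeastLessThan_concat)
  show ?thesis
  proof (cases "q < 2*A")
    case True
    obtain r where r: "q = A + r" using False by (metis le_add_diff_inverse not_less)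
    obtain t where t: "A = r + t" "t \<ge> 1" using True r
      by (metis add_less_cancel_left le_add_diff_inverse less_imp_le_nat mult_2 zero_less_diff Suc_leI One_nat_def)
    have split: "sum F {1..<q+2*A+1} = sum F {1..<q+1} + sum F {q+1..<2*A+1} + sum F {2*A+1..<q+2*A+1}"
      using r t cc[of 1 "2*A+1" "q+2*A+1"] cc[of 1 "q+1" "2*A+1"] by simp
    have p1: "sum F {1..<q+1} = 0"
      by (rule sum.neutral) (auto simp: hh_def F_def)
    have p3: "sum F {2*A+1..<q+2*A+1} = 0"
      by (rule sum.neutral) (auto simp: hh_def F_def)
    have p2: "sum F {q+1..<2*A+1} = - (\<Sum>i<t. ((real r + 1 - m) + real i) * ((1 - m) + real i))"
    proof -
      have "sum F {q+1..<2*A+1} = (\<Sum>i<t. F (q+1+i))"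
      proof -
        have "2*A+1 = (q+1)+t" using r t by simp
        then show ?thesis by (simp only: shift_sum)
      qed
      also have "\<dots> = (\<Sum>i<t. - (((real r + 1 - m) + real i) * ((1 - m) + real i)))"
      proof (rule sum.cong)
        fix i assume "i \<in> {..<t}"
        then have i: "i < t" by simp
        have e1: "hh A (q+1+i) = real (q+1+i) - real A - m" by (rule h2) (use r t i in auto)
        moreover have e2: "q+1+i-q = 1+i" by simp
        moreover have e3: "hh A (1+i) = m - real (1+i)" by (rule h1) (use r t i in auto)
        ultimately show "F (q+1+i) = - (((real r + 1 - m) + real i) * ((1 - m) + real i))"
          unfolding F_def using r by (simp only: e1 e2 e3 of_nat_add of_nat_1) (simp add: algebra_simps)
      qed simp
      finally show ?thesis by (simp add: sum_negf)
    qed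
    show ?thesis
      using False True r t unfolding F_def[symmetric] split p1 p2 p3 PP
      by (simp add: f2_def m_def field_simps power2_eq_square power3_eq_cube)
  next
    case False2: False
    have "sum F {1..<q+2*A+1} = 0"
    proof (rule sum.neutral, intro ballI)
      fix u assume "u \<in> {1..<q+2*A+1}"
      show "F u = 0"
      proof (cases "u \<le> q")
        case True then show ?thesis by (simp add: F_def hh_def)
      next
        case False then show ?thesis using False2 by (simp add: F_def hh_def)
      qed
    qed
    then show ?thesis using False False2 unfolding F_def by simp
  qed
qed

lemma sum_i: "(\<Sum>i<L. real i) = real L * (real L - 1) / 2"
  by (induct L) (simp_all add: field_simps)
lemma sum_i2: "(\<Sum>i<L. (real i)^2) = (real L - 1) * real L * (2 * real L - 1) / 6"
  by (induct L) (simp_all add: field_simps power2_eq_square)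

lemma slope:
  assumes "A \<ge> 2" "\<Delta> > 0"
  shows "ls_slope (\<lambda>i. real i * \<Delta>) (\<lambda>i. a * (real i * \<Delta>) + b + E i) k A =
    a + 12 / (\<Delta> * real A * ((real A)\<^sup>2 - 1)) * (\<Sum>i<A. (1 + real i - (real A + 1)/2) * E (k+1+i))"
proof -
  have iv: "{k+1..k+A} = {k+1..<(k+1)+A}" by auto
  have sh: "sum f {k+1..k+A} = (\<Sum>i<A. f (k+1+i))" for f :: "nat \<Rightarrow> real"
    unfolding iv shift_sum ..
  define SE where "SE = (\<Sum>i<A. E (k+1+i))"
  define SiE where "SiE = (\<Sum>i<A. real i * E (k+1+i))"
  define Si where "Si = real A * (real A - 1) / 2"
  define Si2 where "Si2 = (real A - 1) * real A * (2 * real A - 1) / 6"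
  define K where "K = real k + 1"
  have si: "(\<Sum>i<A. real i) = Si" "(\<Sum>i<A. (real i)^2) = Si2"
    by (simp_all add: Si_def Si2_def sum_i sum_i2)
  have sX: "(\<Sum>i<A. real (k+1+i) * \<Delta>) = \<Delta> * (real A * K + Si)"
    unfolding Si_def K_def sum_i[symmetric] by (simp add: sum.distrib sum_distrib_left algebra_simps)
  have sX2: "(\<Sum>i<A. (real (k+1+i) * \<Delta>)\<^sup>2) = \<Delta>\<^sup>2 * (real A * K\<^sup>2 + 2 * K * Si + Si2)"
    unfolding Si_def Si2_def K_def sum_i[symmetric] sum_i2[symmetric]
    by (simp add: sum.distrib sum_distrib_left sum_distrib_right power2_eq_square algebra_simps)
  have sY: "(\<Sum>i<A. a * (real (k+1+i) * \<Delta>) + b + E (k+1+i)) = a * (\<Delta> * (real A * K + Si)) + real A * b + SE"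
    unfolding sX[symmetric] SE_def by (simp add: sum.distrib sum_distrib_left)
  have sXY: "(\<Sum>i<A. real (k+1+i) * \<Delta> * (a * (real (k+1+i) * \<Delta>) + b + E (k+1+i))) =
     a * (\<Delta>\<^sup>2 * (real A * K\<^sup>2 + 2 * K * Si + Si2)) + b * (\<Delta> * (real A * K + Si)) + \<Delta> * (K * SE + SiE)"
  proof -
    have "(\<Sum>i<A. real (k+1+i) * \<Delta> * (a * (real (k+1+i) * \<Delta>) + b + E (k+1+i))) =
      (\<Sum>i<A. (a*\<Delta>^2*K^2 + b*\<Delta>*K) + (2*a*\<Delta>^2*K + b*\<Delta>) * real i + (a*\<Delta>^2) * (real i)^2
          + (\<Delta>*K) * E (k+1+i) + \<Delta> * (real i * E (k+1+i)))"
      by (rule sum.cong) (simp_all add: K_def power2_eq_square algebra_simps)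
    also have "\<dots> = real A * (a*\<Delta>^2*K^2 + b*\<Delta>*K) + (2*a*\<Delta>^2*K + b*\<Delta>) * (\<Sum>i<A. real i)
         + (a*\<Delta>^2) * (\<Sum>i<A. (real i)^2) + (\<Delta>*K) * SE + \<Delta> * SiE"
      unfolding SE_def SiE_def by (simp add: sum.distrib sum_distrib_left)
    also have "\<dots> = a * (\<Delta>\<^sup>2 * (real A * K\<^sup>2 + 2 * K * Si + Si2)) + b * (\<Delta> * (real A * K + Si)) + \<Delta> * (K * SE + SiE)"
      unfolding si by (simp add: algebra_simps power2_eq_square)
    finally show ?thesis .
  qed
  have sW: "(\<Sum>i<A. (1 + real i - (real A + 1)/2) * E (k+1+i)) = SE + SiE - (real A + 1)/2 * SE"
    unfolding SE_def SiE_def by (simp add: sum.distrib sum_distrib_left algebra_simps sum_subtractf)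
  have A2: "real A \<ge> 2" using assms by simp
  have A4: "2^2 \<le> (real A)\<^sup>2" using power_mono[OF A2, of 2] by simp
  have D: "(real A)\<^sup>2 - 1 > 0" using A4 by simp
  show ?thesis

  proof -
    define Den where "Den = real A * (\<Delta>\<^sup>2 * (real A * K\<^sup>2 + 2 * K * Si + Si2)) - (\<Delta> * (real A * K + Si))\<^sup>2"
    have c: "real A * Si2 - Si\<^sup>2 = (real A)\<^sup>2 * ((real A)\<^sup>2 - 1) / 12"
      unfolding Si_def Si2_def by (simp add: field_simps power2_eq_square)
    have Dv: "Den = \<Delta>\<^sup>2 * ((real A)\<^sup>2 * ((real A)\<^sup>2 - 1) / 12)"
      unfolding c[symmetric] Den_def by (simp add: algebra_simps power2_eq_square)
    have Nv: "real A * (a * (\<Delta>\<^sup>2 * (real A * K\<^sup>2 + 2 * K * Si + Si2)) + b * (\<Delta> * (real A * K + Si)) + \<Delta> * (K * SE + SiE)) -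
        \<Delta> * (real A * K + Si) * (a * (\<Delta> * (real A * K + Si)) + real A * b + SE)
        = a * Den + \<Delta> * real A * (SE + SiE - (real A + 1) / 2 * SE)"
      unfolding Den_def Si_def by (simp add: field_simps power2_eq_square)
    have D': "(real A)\<^sup>2 - 1 \<noteq> 0" using D by linarith
    have pos: "Den \<noteq> 0" unfolding Dv using D' assms by simp
    have Ap: "real A \<noteq> 0" using assms by simp
    define W where "W = SE + SiE - (real A + 1) / 2 * SE"
    have e1: "(a * Den + \<Delta> * real A * W) / Den = a + \<Delta> * real A * W / Den"
      using pos by (simp add: add_divide_distrib)
    have e2: "\<Delta> * real A * W / Den = 12 / (\<Delta> * real A * ((real A)\<^sup>2 - 1)) * W"
      unfolding Dv using D' Ap assms by (simp add: field_simps power2_eq_square)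
    show ?thesis by (simp only: ls_slope_def sh sX sX2 sY sXY sW Nv Den_def[symmetric] W_def[symmetric] e1 e2)
  qed
qed


lemma red:
  fixes F :: "nat \<Rightarrow> real"
  assumes "s + L \<le> n" "\<And>j. j \<le> s \<or> s + L < j \<Longrightarrow> F j = 0"
  shows "(\<Sum>j\<in>{1..n}. F j) = (\<Sum>u\<in>{1..<L+1}. F (u+s))"
proof -
  have "(\<Sum>j\<in>{1..n}. F j) = (\<Sum>j\<in>{1+s..<(L+1)+s}. F j)"
    by (rule sum.mono_neutral_right) (use assms in \<open>auto simp: not_le\<close>)
  also have "\<dots> = (\<Sum>u\<in>{1..<L+1}. F (u+s))" by (rule sum.shift_bounds_nat_ivl)
  finally show ?thesis .
qed

lemma comb:
  assumes "A \<ge> 2" "s + q + 2*A \<le> n"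
  shows "(\<Sum>j\<in>{1..n}. hh A (j - s) * hh A (j - (s + q))) =
     (if real q < real A then f1 (real q) (real A)
      else if real q \<le> 2*real A - 1 then f2 (real q) (real A) else 0)"
proof -
  have "(\<Sum>j\<in>{1..n}. hh A (j - s) * hh A (j - (s + q))) = (\<Sum>u\<in>{1..<q+2*A+1}. hh A (u+s - s) * hh A (u+s - (s + q)))"
    by (rule red[where F="\<lambda>j. hh A (j - s) * hh A (j - (s + q))"]) (use assms in \<open>auto simp: hh_def\<close>)
  also have "\<dots> = (\<Sum>u\<in>{1..<q+2*A+1}. hh A u * hh A (u - q))" by simp
  finally show ?thesis using comb0[OF assms(1)] by simp
qed

lemma d3rep:
  assumes "A \<ge> 2" "\<Delta> > 0" "A \<le> k" "k + A \<le> n"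
  shows "D3 (\<lambda>i. real i * \<Delta>) (\<lambda>i. a * (real i * \<Delta>) + b + E i) k A =
     12 / (\<Delta> * real A * ((real A)\<^sup>2 - 1)) * (\<Sum>j\<in>{1..n}. hh A (j - (k - A)) * E j)"
proof -
  define s where "s = k - A"
  have ks: "k = s + A" using assms s_def by simp
  define m where "m = (real A + 1)/2"
  have "(\<Sum>j\<in>{1..n}. hh A (j - s) * E j) = (\<Sum>u\<in>{1..<2*A+1}. hh A (u+s - s) * E (u+s))"
    by (rule red[where F="\<lambda>j. hh A (j - s) * E j"]) (use assms ks in \<open>auto simp: hh_def\<close>)
  also have "\<dots> = (\<Sum>u\<in>{1..<2*A+1}. hh A u * E (u+s))" by simp
  also have "\<dots> = (\<Sum>u\<in>{1..<A+1}. hh A u * E (u+s)) + (\<Sum>u\<in>{A+1..<2*A+1}. hh A u * E (u+s))"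
    by (rule sum.atLeastLessThan_concat[symmetric]) simp_all
  also have "(\<Sum>u\<in>{1..<A+1}. hh A u * E (u+s)) = (\<Sum>i<A. hh A (1+i) * E (1+i+s))"
    using shift_sum[of "\<lambda>u. hh A u * E (u+s)" 1 A] by (simp add: add.commute)
  also have "\<dots> = - (\<Sum>i<A. (1 + real i - m) * E (s+1+i))"
    by (simp add: sum_negf[symmetric] hh_def m_def algebra_simps)
  also have "(\<Sum>u\<in>{A+1..<2*A+1}. hh A u * E (u+s)) = (\<Sum>i<A. hh A (A+1+i) * E (A+1+i+s))"
  proof -
    have "2*A+1 = (A+1)+A" by simp
    then show ?thesis by (simp only: shift_sum)
  qed
  also have "\<dots> = (\<Sum>i<A. (1 + real i - m) * E (k+1+i))"
    by (rule sum.cong) (simp_all add: hh_def m_def ks algebra_simps)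
  finally have r: "(\<Sum>j\<in>{1..n}. hh A (j - s) * E j) = (\<Sum>i<A. (1 + real i - m) * E (k+1+i)) - (\<Sum>i<A. (1 + real i - m) * E (s+1+i))"
    by simp
  show ?thesis
    unfolding D3_def slope[OF assms(1,2)] s_def[symmetric] r m_def
    by (simp add: algebra_simps)
qed



lemma distr_integrable:
  fixes g :: "real \<Rightarrow> real"
  assumes D: "distributed M lborel X (\<lambda>x. ennreal (f x))" and nn: "\<And>x. 0 \<le> f x"
    and I: "integrable lborel (\<lambda>x. f x * g x)" and g[measurable]: "g \<in> borel_measurable borel"
  shows "integrable M (\<lambda>x. g (X x))"
proof -
  have [measurable]: "X \<in> measurable M lborel" using distributed_measurable[OF D] .
  have [measurable]: "X \<in> borel_measurable M" using distributed_measurable[OF D] by simp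
  have fm[measurable]: "f \<in> borel_measurable lborel" using distributed_real_measurable[OF _ D] nn by simp
  have "integrable (density lborel f) g"
    using I nn by (subst integrable_density) auto
  then have "integrable (distr M lborel X) g"
    using distributed_distr_eq_density[OF D] by simp
  then show ?thesis by (subst (asm) integrable_distr_eq) auto
qed

context prob_space
begin

lemma normal_facts:
  assumes s: "\<sigma> > 0" and D: "distributed M lborel X (normal_density 0 \<sigma>)"
  shows "integrable M X" "integrable M (\<lambda>x. X x * X x)" "expectation X = 0"
    "expectation (\<lambda>x. X x * X x) = \<sigma>\<^sup>2"
proof -
  have a1: "integrable lborel (\<lambda>x. normal_density 0 \<sigma> x * x)"
    using integrable_normal_moment_nz_1[OF s, of 0] by simp
  have a2: "integrable lborel (\<lambda>x. normal_density 0 \<sigma> x * (x * x))"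
    using integrable_normal_moment[OF s, of 0 2] by (simp add: power2_eq_square)
  show i1: "integrable M X"
    using distr_integrable[OF D normal_density_nonneg a1] by simp
  show "integrable M (\<lambda>x. X x * X x)"
    using distr_integrable[OF D normal_density_nonneg a2] by simp
  show e: "expectation X = 0" using normal_distributed_expectation[OF s D] .
  show "expectation (\<lambda>x. X x * X x) = \<sigma>\<^sup>2"
    using normal_distributed_variance[OF s D] e by (simp add: power2_eq_square)
qed


lemma lin:
  assumes indep: "indep_vars (\<lambda>_. borel) e I" and fin: "finite I"
   and D: "\<And>i. i \<in> I \<Longrightarrow> distributed M lborel (e i) (normal_density 0 \<sigma>)" and s: "\<sigma> > 0"
  shows "integrable M (\<lambda>w. \<Sum>j\<in>I. c j * e j w)"
    "expectation (\<lambda>w. \<Sum>j\<in>I. c j * e j w) = 0"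
    "integrable M (\<lambda>w. (\<Sum>j\<in>I. c j * e j w) * (\<Sum>j\<in>I. d j * e j w))"
    "expectation (\<lambda>w. (\<Sum>j\<in>I. c j * e j w) * (\<Sum>j\<in>I. d j * e j w)) = \<sigma>\<^sup>2 * (\<Sum>j\<in>I. c j * d j)"
proof -
  note nf = normal_facts[OF s D]
  have pair: "integrable M (\<lambda>w. e i w * e j w) \<and> expectation (\<lambda>w. e i w * e j w) = (if i = j then \<sigma>\<^sup>2 else 0)"
    if ij: "i \<in> I" "j \<in> I" for i j
  proof (cases "i = j")
    case True then show ?thesis using nf(2,4)[OF ij(1)] by simp
  next
    case False
    have ind: "indep_vars (\<lambda>_. borel) e {i, j}" by (rule indep_vars_subset[OF indep]) (use ij in auto)
    have ints: "\<And>k. k \<in> {i,j} \<Longrightarrow> integrable M (e k)" using nf(1) ij by auto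
    have pr: "(\<lambda>w. \<Prod>k\<in>{i,j}. e k w) = (\<lambda>w. e i w * e j w)" using False by auto
    have "integrable M (\<lambda>w. e i w * e j w)"
      using indep_vars_integrable[OF _ ind ints] unfolding pr by simp
    moreover have "expectation (\<lambda>w. e i w * e j w) = 0"
      using indep_vars_lebesgue_integral[OF _ ind ints] nf(3) ij False unfolding pr by simp
    ultimately show ?thesis using False by simp
  qed
  show "integrable M (\<lambda>w. \<Sum>j\<in>I. c j * e j w)"
    using nf(1) by auto
  show "expectation (\<lambda>w. \<Sum>j\<in>I. c j * e j w) = 0"
    using nf(1,3) by (subst Bochner_Integration.integral_sum) auto
  have prod: "(\<lambda>w. (\<Sum>j\<in>I. c j * e j w) * (\<Sum>j\<in>I. d j * e j w)) =
     (\<lambda>w. \<Sum>i\<in>I. \<Sum>j\<in>I. (c i * d j) * (e i w * e j w))"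
    by (simp add: sum_product algebra_simps)
  show "integrable M (\<lambda>w. (\<Sum>j\<in>I. c j * e j w) * (\<Sum>j\<in>I. d j * e j w))"
    unfolding prod using pair by auto
  have "expectation (\<lambda>w. (\<Sum>j\<in>I. c j * e j w) * (\<Sum>j\<in>I. d j * e j w)) =
      (\<Sum>i\<in>I. \<Sum>j\<in>I. (c i * d j) * expectation (\<lambda>w. e i w * e j w))"
  proof -
    have ii: "\<And>i j. i \<in> I \<Longrightarrow> j \<in> I \<Longrightarrow> integrable M (\<lambda>w. e i w * e j w)" using pair by blast
    have "expectation (\<lambda>w. \<Sum>i\<in>I. \<Sum>j\<in>I. (c i * d j) * (e i w * e j w)) =
        (\<Sum>i\<in>I. expectation (\<lambda>w. \<Sum>j\<in>I. (c i * d j) * (e i w * e j w)))"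
      by (rule Bochner_Integration.integral_sum) (use ii in auto)
    also have "\<dots> = (\<Sum>i\<in>I. \<Sum>j\<in>I. (c i * d j) * expectation (\<lambda>w. e i w * e j w))"
    proof (rule sum.cong[OF refl])
      fix i assume "i \<in> I"
      have "expectation (\<lambda>w. \<Sum>j\<in>I. (c i * d j) * (e i w * e j w)) =
          (\<Sum>j\<in>I. expectation (\<lambda>w. (c i * d j) * (e i w * e j w)))"
        by (rule Bochner_Integration.integral_sum) (use ii \<open>i \<in> I\<close> in auto)
      then show "expectation (\<lambda>w. \<Sum>j\<in>I. (c i * d j) * (e i w * e j w)) =
          (\<Sum>j\<in>I. (c i * d j) * expectation (\<lambda>w. e i w * e j w))" by simp
    qed
    finally show ?thesis unfolding prod .
  qed
  also have "\<dots> = (\<Sum>i\<in>I. \<Sum>j\<in>I. (c i * d j) * (if i = j then \<sigma>\<^sup>2 else 0))"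
    using pair by (intro sum.cong refl) auto
  also have "\<dots> = \<sigma>\<^sup>2 * (\<Sum>j\<in>I. c j * d j)"
    using fin by (simp add: sum_distrib_left algebra_simps if_distrib cong: if_cong)
  finally show "expectation (\<lambda>w. (\<Sum>j\<in>I. c j * e j w) * (\<Sum>j\<in>I. d j * e j w)) = \<sigma>\<^sup>2 * (\<Sum>j\<in>I. c j * d j)" .
qed

end


theorem lemma4:
  fixes M :: "'a measure" and e :: "nat \<Rightarrow> 'a \<Rightarrow> real"
    and n A k1 k2 :: nat and \<Delta> a b \<sigma> :: real
  assumes "prob_space M"
    and "prob_space.indep_vars M (\<lambda>_. borel) e {1..n}"
    and "\<And>i. i \<in> {1..n} \<Longrightarrow> distributed M lborel (e i) (normal_density 0 \<sigma>)"
    and "\<sigma> > 0" and "\<Delta> > 0" and "A \<ge> 2"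
    and "A \<le> k1" and "k1 \<le> n - A" and "A \<le> k2" and "k2 \<le> n - A"
  defines "X \<equiv> (\<lambda>i::nat. real i * \<Delta>)"
    and "Y \<equiv> (\<lambda>w (i::nat). a * (real i * \<Delta>) + b + e i w)"
    and "p \<equiv> \<bar>real k2 - real k1\<bar>"
  shows "cov M (D3_std M X Y k1 A) (D3_std M X Y k2 A) =
           6 / (real A * ((real A)\<^sup>2 - 1)) *
           (if p < real A then f1 p (real A)
            else if p \<le> 2 * real A - 1 then f2 p (real A)
            else 0)"
proof -
  interpret P: prob_space M by fact
  have n1: "k1 + A \<le> n" and n2: "k2 + A \<le> n" using assms(6-10) by auto
  define K where "K = 12 / (\<Delta> * real A * ((real A)\<^sup>2 - 1))"
  define g where "g k j = hh A (j - (k - A))" for k j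
  define L where "L k w = (\<Sum>j\<in>{1..n}. g k j * e j w)" for k w
  define S where "S k k' = (\<Sum>j\<in>{1..n}. g k j * g k' j)" for k k'
  define c0 where "c0 = real A * ((real A)\<^sup>2 - 1) / 6"
  have A2: "real A \<ge> 2" using assms by simp
  have A4: "2^2 \<le> (real A)\<^sup>2" using power_mono[OF A2, of 2] by simp
  have c0pos: "c0 > 0" unfolding c0_def using A2 A4 by simp
  have Kpos: "K > 0" unfolding K_def using A2 A4 assms by simp
  have D3eq: "D3 X (Y w) k A = K * L k w" if "A \<le> k" "k + A \<le> n" for k w
    unfolding X_def Y_def K_def L_def g_def
    by (rule d3rep[where E="\<lambda>i. e i w"]) (use assms that in auto)
  note lin = P.lin[OF assms(2) _ assms(3,4), simplified]
  have Skk: "S k k = c0" if "A \<le> k" "k + A \<le> n" for k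
  proof -
    have "S k k = (if real 0 < real A then f1 (real 0) (real A)
      else if real 0 \<le> 2*real A - 1 then f2 (real 0) (real A) else 0)"
      unfolding S_def g_def using comb[of A "k - A" 0 n] assms that by simp
    then show ?thesis using assms unfolding c0_def f1_def by (simp add: power2_eq_square algebra_simps)
  qed
  define V where "V = sqrt (K\<^sup>2 * \<sigma>\<^sup>2 * c0)"
  have Vpos: "V > 0" unfolding V_def using Kpos c0pos assms by simp
  have VV: "V\<^sup>2 = K\<^sup>2 * \<sigma>\<^sup>2 * c0" unfolding V_def using Kpos c0pos by simp
  have var: "var M (\<lambda>v. D3 X (Y v) k A) = V\<^sup>2" if "A \<le> k" "k + A \<le> n" for k
  proof -
    have "var M (\<lambda>v. D3 X (Y v) k A) = var M (\<lambda>v. K * L k v)"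
      using D3eq[OF that] by simp
    also have "\<dots> = P.expectation (\<lambda>v. K\<^sup>2 * (L k v * L k v))"
      unfolding var_def L_def using lin(2)[of "g k"] by (simp add: power2_eq_square algebra_simps)
    also have "\<dots> = K\<^sup>2 * (\<sigma>\<^sup>2 * S k k)"
      unfolding L_def S_def using lin(4)[of "g k" "g k"] by simp
    finally show ?thesis unfolding VV Skk[OF that] by simp
  qed
  have std: "D3_std M X Y k A = (\<lambda>w. (K / V) * L k w)" if "A \<le> k" "k + A \<le> n" for k
    unfolding D3_std_def var[OF that] using D3eq[OF that] Vpos by (simp add: fun_eq_iff)
  have cv: "cov M (D3_std M X Y k1 A) (D3_std M X Y k2 A) = S k1 k2 / c0"
  proof -
    have E0: "P.expectation (\<lambda>w. (K / V) * L k w) = 0" for k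
      unfolding L_def using lin(2)[of "g k"] by simp
    have "cov M (D3_std M X Y k1 A) (D3_std M X Y k2 A) =
        P.expectation (\<lambda>w. (K / V)\<^sup>2 * (L k1 w * L k2 w))"
      unfolding cov_def std[OF assms(7) n1] std[OF assms(9) n2] E0
      by (simp add: power2_eq_square algebra_simps)
    also have "\<dots> = (K / V)\<^sup>2 * (\<sigma>\<^sup>2 * S k1 k2)"
      unfolding L_def S_def using lin(4)[of "g k1" "g k2"] by simp
    also have "\<dots> = S k1 k2 / c0"
      using VV Vpos Kpos c0pos assms(4) by (simp add: power_divide field_simps)
    finally show ?thesis .
  qed
  have Sval: "S k1 k2 = (if p < real A then f1 p (real A)
            else if p \<le> 2 * real A - 1 then f2 p (real A) else 0)"
  proof (cases "k1 \<le> k2")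
    case True
    have pq: "p = real (k2 - k1)" unfolding p_def using True by simp
    have "k2 - A = (k1 - A) + (k2 - k1)" using True assms by simp
    then show ?thesis unfolding S_def g_def pq
      using comb[of A "k1 - A" "k2 - k1" n] assms n2 True by simp
  next
    case False
    have pq: "p = real (k1 - k2)" unfolding p_def using False by simp
    have sym: "S k1 k2 = S k2 k1" unfolding S_def by (simp add: mult.commute)
    have "k1 - A = (k2 - A) + (k1 - k2)" using False assms by simp
    then have "S k2 k1 = (if p < real A then f1 p (real A)
            else if p \<le> 2 * real A - 1 then f2 p (real A) else 0)" unfolding S_def g_def pq
      using comb[of A "k2 - A" "k1 - k2" n] assms n1 False by simp
    then show ?thesis by (rule trans[OF sym])
  qed
  show ?thesis unfolding cv Sval c0_def by (simp add: field_simps)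
qed

end
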